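(* Let $d=2$, $\mathcal{H}$ a separable Hilbert space, $\Lambda=\mathrm{Span}_\mathbb{Z}\{e_1,e_2\}\subset\mathbb{R}^2$, and $\{P(k)\}$ a family of orthogonal projectors of finite rank $m$ satisfying (P2)–(P4) below. Let $r\in\mathbb{Z}$. Then there exists a piecewise-smooth map $X:\partial\mathbb{B}_{\rm red}\to\mathcal{U}(\mathbb{C}^m)$ such that: (i) the winding number (degree) of $\det X:\partial\mathbb{B}_{\rm red}\to U(1)$, with $\partial\mathbb{B}_{\rm red}$ traversed $v_1\to v_2\to\cdots\to v_6\to v_1$, equals $-r$; (ii) whenever $\Phi:\partial\mathbb{B}_{\rm red}\to\mathcal{H}^m$, with $\Phi(k)$ an orthonormal basis of $\operatorname{Ran}P(k)$ for each $k$, satisfies the edge symmetries below, the frame $k\mapsto\Phi(k)\triangleleft X(k)$ also satisfies them; (iii) $X(k)\ne\mathrm{Id}$ only for $k\in E_3\cup E_4$.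
   Context: (P2) $\tau:\Lambda\to\mathcal{U}(\mathcal{H})$ is a unitary representation with $P(k+\lambda)=\tau_\lambda P(k)\tau_\lambda^{-1}$; (P3) $\Theta$ is antiunitary with $P(-k)=\Theta P(k)\Theta^{-1}$, $\Theta^2=\mathrm{Id}$; (P4) $\Theta\tau_\lambda=\tau_\lambda^{-1}\Theta$. In coordinates $(k_1,k_2)\leftrightarrow k_1e_1+k_2e_2$, $\mathbb{B}_{\rm red}=[0,\tfrac12]\times[-\tfrac12,\tfrac12]$, with vertices $v_1=(0,0)$, $v_2=(0,-\tfrac12)$, $v_3=(\tfrac12,-\tfrac12)$, $v_4=(\tfrac12,0)$, $v_5=(\tfrac12,\tfrac12)$, $v_6=(0,\tfrac12)$, and $E_i$ the segment from $v_i$ to $v_{i+1}$ ($v_7=v_1$). Edge symmetries: $\Phi(-k)=\Theta\Phi(k)$ for $k\in E_1\cup E_6$; $\Phi(k+e_2)=\tau_{e_2}\Phi(k)$ for $k\in E_2$; $\Phi(e_1-k)=\tau_{e_1}\Theta\Phi(k)$ for $k\in E_3\cup E_4$; $\Phi(k-e_2)=\tau_{e_2}^{-1}\Phi(k)$ for $k\in E_5$. Operators act on frames componentwise; $(\Phi\triangleleft U)_b=\sum_a\phi_aU_{ab}$. *)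

theory Defs
  imports "HOL-Analysis.Analysis" "HOL-Complex_Analysis.Complex_Analysis"
begin

definition hnorm :: "('h \<Rightarrow> 'h \<Rightarrow> complex) \<Rightarrow> 'h \<Rightarrow> real" where
  "hnorm ip x = sqrt (Re (ip x x))"

definition complex_inner_space :: "(complex \<Rightarrow> 'h::ab_group_add \<Rightarrow> 'h) \<Rightarrow> ('h \<Rightarrow> 'h \<Rightarrow> complex) \<Rightarrow> bool" where
  "complex_inner_space sc ip \<longleftrightarrow>
     (\<forall>a x y. sc a (x + y) = sc a x + sc a y) \<and>
     (\<forall>a b x. sc (a + b) x = sc a x + sc b x) \<and>
     (\<forall>a b x. sc a (sc b x) = sc (a * b) x) \<and>
     (\<forall>x. sc 1 x = x) \<and>
     (\<forall>x y z. ip (x + y) z = ip x z + ip y z) \<and>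
     (\<forall>a x y. ip (sc a x) y = a * ip x y) \<and>
     (\<forall>x y. ip y x = cnj (ip x y)) \<and>
     (\<forall>x. Re (ip x x) \<ge> 0) \<and>
     (\<forall>x. ip x x = 0 \<longrightarrow> x = 0)"

definition hilbert_space :: "(complex \<Rightarrow> 'h::ab_group_add \<Rightarrow> 'h) \<Rightarrow> ('h \<Rightarrow> 'h \<Rightarrow> complex) \<Rightarrow> bool" where
  "hilbert_space sc ip \<longleftrightarrow> complex_inner_space sc ip \<and>
     (\<forall>f :: nat \<Rightarrow> 'h.
        (\<forall>e>0. \<exists>N. \<forall>m\<ge>N. \<forall>n\<ge>N. hnorm ip (f m - f n) < e) \<longrightarrow>
        (\<exists>x. \<forall>e>0. \<exists>N. \<forall>n\<ge>N. hnorm ip (f n - x) < e))"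

definition separable_hs :: "('h::ab_group_add \<Rightarrow> 'h \<Rightarrow> complex) \<Rightarrow> bool" where
  "separable_hs ip \<longleftrightarrow> (\<exists>D. countable D \<and> (\<forall>x e. e > 0 \<longrightarrow> (\<exists>d\<in>D. hnorm ip (x - d) < e)))"

definition clinear_map :: "(complex \<Rightarrow> 'h::ab_group_add \<Rightarrow> 'h) \<Rightarrow> ('h \<Rightarrow> 'h) \<Rightarrow> bool" where
  "clinear_map sc A \<longleftrightarrow> (\<forall>x y. A (x + y) = A x + A y) \<and> (\<forall>c x. A (sc c x) = sc c (A x))"

definition orth_projector :: "(complex \<Rightarrow> 'h::ab_group_add \<Rightarrow> 'h) \<Rightarrow> ('h \<Rightarrow> 'h \<Rightarrow> complex) \<Rightarrow> ('h \<Rightarrow> 'h) \<Rightarrow> bool" where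
  "orth_projector sc ip Q \<longleftrightarrow> clinear_map sc Q \<and> Q \<circ> Q = Q \<and> (\<forall>x y. ip (Q x) y = ip x (Q y))"

definition is_onb :: "(complex \<Rightarrow> 'h::ab_group_add \<Rightarrow> 'h) \<Rightarrow> ('h \<Rightarrow> 'h \<Rightarrow> complex) \<Rightarrow> 'h set \<Rightarrow> ('m::finite \<Rightarrow> 'h) \<Rightarrow> bool" where
  "is_onb sc ip S b \<longleftrightarrow> (\<forall>a a'. ip (b a) (b a') = (if a = a' then 1 else 0)) \<and>
     S = {(\<Sum>a\<in>UNIV. sc (c a) (b a)) | c. True}"

definition unitary_op :: "(complex \<Rightarrow> 'h::ab_group_add \<Rightarrow> 'h) \<Rightarrow> ('h \<Rightarrow> 'h \<Rightarrow> complex) \<Rightarrow> ('h \<Rightarrow> 'h) \<Rightarrow> bool" where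
  "unitary_op sc ip U \<longleftrightarrow> clinear_map sc U \<and> surj U \<and> (\<forall>x y. ip (U x) (U y) = ip x y)"

definition antiunitary_op :: "(complex \<Rightarrow> 'h::ab_group_add \<Rightarrow> 'h) \<Rightarrow> ('h \<Rightarrow> 'h \<Rightarrow> complex) \<Rightarrow> ('h \<Rightarrow> 'h) \<Rightarrow> bool" where
  "antiunitary_op sc ip T \<longleftrightarrow> (\<forall>x y. T (x + y) = T x + T y) \<and> (\<forall>c x. T (sc c x) = sc (cnj c) (T x))
     \<and> surj T \<and> (\<forall>x y. ip (T x) (T y) = cnj (ip x y))"

text \<open>Lattice \<Lambda> = Z e1 + Z e2, in coordinates: (n1,n2) corresponds to n1 e1 + n2 e2.\<close>
definition lat :: "int \<times> int \<Rightarrow> real \<times> real" where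
  "lat n = (of_int (fst n), of_int (snd n))"

definition unitary_rep :: "(complex \<Rightarrow> 'h::ab_group_add \<Rightarrow> 'h) \<Rightarrow> ('h \<Rightarrow> 'h \<Rightarrow> complex) \<Rightarrow> (int \<times> int \<Rightarrow> 'h \<Rightarrow> 'h) \<Rightarrow> bool" where
  "unitary_rep sc ip \<tau> \<longleftrightarrow> (\<forall>l. unitary_op sc ip (\<tau> l)) \<and> (\<forall>l l'. \<tau> (l + l') = \<tau> l \<circ> \<tau> l')"

definition v1 :: "real \<times> real" where "v1 = (0, 0)"
definition v2 :: "real \<times> real" where "v2 = (0, -1/2)"
definition v3 :: "real \<times> real" where "v3 = (1/2, -1/2)"
definition v4 :: "real \<times> real" where "v4 = (1/2, 0)"
definition v5 :: "real \<times> real" where "v5 = (1/2, 1/2)"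
definition v6 :: "real \<times> real" where "v6 = (0, 1/2)"

definition E1 where "E1 = closed_segment v1 v2"
definition E2 where "E2 = closed_segment v2 v3"
definition E3 where "E3 = closed_segment v3 v4"
definition E4 where "E4 = closed_segment v4 v5"
definition E5 where "E5 = closed_segment v5 v6"
definition E6 where "E6 = closed_segment v6 v1"

definition bdry :: "(real \<times> real) set" where
  "bdry = E1 \<union> E2 \<union> E3 \<union> E4 \<union> E5 \<union> E6"

definition bdry_path :: "real \<Rightarrow> real \<times> real" where
  "bdry_path = linepath v1 v2 +++ (linepath v2 v3 +++ (linepath v3 v4 +++
      (linepath v4 v5 +++ (linepath v5 v6 +++ linepath v6 v1))))"

definition e1 :: "real \<times> real" where "e1 = (1, 0)"
definition e2 :: "real \<times> real" where "e2 = (0, 1)"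

definition frame_act :: "(complex \<Rightarrow> 'h::ab_group_add \<Rightarrow> 'h) \<Rightarrow> ('m::finite \<Rightarrow> 'h) \<Rightarrow> complex^'m^'m \<Rightarrow> ('m \<Rightarrow> 'h)" where
  "frame_act sc \<phi> U = (\<lambda>b. \<Sum>a\<in>UNIV. sc (U $ a $ b) (\<phi> a))"

definition edge_sym :: "('h \<Rightarrow> 'h) \<Rightarrow> (int \<times> int \<Rightarrow> 'h \<Rightarrow> 'h) \<Rightarrow> (real \<times> real \<Rightarrow> 'm \<Rightarrow> 'h) \<Rightarrow> bool" where
  "edge_sym \<Theta> \<tau> \<Phi> \<longleftrightarrow>
     (\<forall>k\<in>E1 \<union> E6. \<Phi> (-k) = \<Theta> \<circ> \<Phi> k) \<and>
     (\<forall>k\<in>E2. \<Phi> (k + e2) = \<tau> (0, 1) \<circ> \<Phi> k) \<and>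
     (\<forall>k\<in>E3 \<union> E4. \<Phi> (e1 - k) = \<tau> (1, 0) \<circ> \<Theta> \<circ> \<Phi> k) \<and>
     (\<forall>k\<in>E5. \<Phi> (k - e2) = inv (\<tau> (0, 1)) \<circ> \<Phi> k)"

definition cadjoint :: "complex^'m^'m \<Rightarrow> complex^'m^'m" where
  "cadjoint U = (\<chi> i j. cnj (U $ j $ i))"

definition unitary_mat :: "complex^'m^'m \<Rightarrow> bool" where
  "unitary_mat U \<longleftrightarrow> U ** cadjoint U = mat 1 \<and> cadjoint U ** U = mat 1"

definition smooth_on_open :: "(real \<Rightarrow> 'a::real_normed_vector) \<Rightarrow> real set \<Rightarrow> bool" where
  "smooth_on_open f U \<longleftrightarrow> (\<exists>D :: nat \<Rightarrow> real \<Rightarrow> 'a. (\<forall>t\<in>U. D 0 t = f t) \<and>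
      (\<forall>n. \<forall>t\<in>U. (D n has_vector_derivative D (Suc n) t) (at t)))"

definition piecewise_smooth_on :: "(real \<Rightarrow> 'a::real_normed_vector) \<Rightarrow> real set \<Rightarrow> bool" where
  "piecewise_smooth_on f I \<longleftrightarrow> continuous_on I f \<and>
      (\<exists>S. finite S \<and> smooth_on_open f (interior I - S))"

end

theory Submission imports Defs begin

definition Ep :: "complex \<Rightarrow> complex \<Rightarrow> real \<Rightarrow> complex" where
  "Ep a c = (\<lambda>t. exp (a + c * of_real t))"

lemma Ep_deriv: "(Ep a c has_vector_derivative (c * Ep a c t)) (at t within S)"
proof -
  have "((\<lambda>z. exp (a + c * z)) has_field_derivative (exp (a + c * of_real t) * c)) (at (of_real t))"
    by (auto intro!: derivative_eq_intros)
  from has_vector_derivative_real_field[OF this, of S] show ?thesis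
    by (simp add: Ep_def mult.commute)
qed

lemma Ep_cont: "continuous_on S (Ep a c)"
  unfolding Ep_def by (intro continuous_intros)

lemma Ep_path: "path (Ep a c)" by (simp add: path_def Ep_cont)

lemma Ep_nz: "0 \<notin> path_image (Ep a c)"
  by (auto simp: path_image_def Ep_def)

lemma Ep_valid: "valid_path (Ep a c)"
proof -
  have "Ep a c C1_differentiable_on {0..1}"
  proof -
    have d: "\<And>x. (Ep a c has_vector_derivative (c * Ep a c x)) (at x)" using Ep_deriv[of a c _ UNIV] by simp
    have cc: "continuous_on {0..1} (\<lambda>x. c * Ep a c x)" unfolding Ep_def by (intro continuous_intros)
    show ?thesis unfolding C1_differentiable_on_def using d cc by (intro exI[of _ "\<lambda>x. c * Ep a c x"]) auto
  qed
  then show ?thesis by (simp add: valid_path_def C1_differentiable_imp_piecewise)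
qed

lemma Ep_winding: "winding_number (Ep a c) 0 = c / (2*pi*\<i>)"
proof -
  have "((\<lambda>w. 1/(w - 0)) has_contour_integral c) (Ep a c)"
    unfolding has_contour_integral_def
  proof (rule has_integral_eq[where f="\<lambda>x. c"])
    fix x :: real assume x: "x \<in> {0..1}"
    have "vector_derivative (Ep a c) (at x within {0..1}) = c * Ep a c x"
      by (rule vector_derivative_within_closed_interval) (use x Ep_deriv in auto)
    then show "c = 1 / (Ep a c x - 0) * vector_derivative (Ep a c) (at x within {0..1})"
      by (simp add: Ep_def)
  next
    show "((\<lambda>x. c) has_integral c) {0..1::real}"
      using has_integral_const_real[of c 0 1] by simp
  qed
  then show ?thesis
    using winding_number_valid_path[OF Ep_valid Ep_nz] contour_integral_unique by simp
qed

lemma chain2: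
  assumes "(g has_vector_derivative g') (at (2*t+d))"
  shows "((\<lambda>u. c *\<^sub>R g (2*u+d)) has_vector_derivative (c *\<^sub>R (2 *\<^sub>R g'))) (at t)"
proof -
  have "((\<lambda>u. 2*u+d) has_vector_derivative 2) (at t)"
    by (auto intro!: derivative_eq_intros)
  from vector_diff_chain_at[OF this, of g g'] assms
  have "((g \<circ> (\<lambda>u. 2*u+d)) has_vector_derivative (2 *\<^sub>R g')) (at t)" by simp
  from bounded_linear.has_vector_derivative[OF bounded_linear_scaleR_right this, of c]
  show ?thesis by (simp add: o_def)
qed

lemma smooth_join:
  assumes A: "smooth_on_open a ({0<..<1} - Sa)" and B: "smooth_on_open b ({0<..<1} - Sb)"
  shows "smooth_on_open (a +++ b) ({0<..<1} - ({1/2} \<union> (\<lambda>x. x/2) ` Sa \<union> (\<lambda>x. (x+1)/2) ` Sb))"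
proof -
  obtain Da where Da: "\<forall>t\<in>{0<..<1} - Sa. Da 0 t = a t"
      "\<forall>n. \<forall>t\<in>{0<..<1} - Sa. (Da n has_vector_derivative Da (Suc n) t) (at t)"
    using A unfolding smooth_on_open_def by blast
  obtain Db where Db: "\<forall>t\<in>{0<..<1} - Sb. Db 0 t = b t"
      "\<forall>n. \<forall>t\<in>{0<..<1} - Sb. (Db n has_vector_derivative Db (Suc n) t) (at t)"
    using B unfolding smooth_on_open_def by blast
  define D where "D n t = (if t < 1/2 then (2^n) *\<^sub>R Da n (2*t+0) else (2^n) *\<^sub>R Db n (2*t+(-1)))" for n t
  let ?U = "{0<..<1} - ({1/2} \<union> (\<lambda>x. x/2) ` Sa \<union> (\<lambda>x. (x+1)/2) ` Sb)"
  show ?thesis unfolding smooth_on_open_def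
  proof (intro exI[of _ D] conjI allI ballI)
    fix t assume t: "t \<in> ?U"
    show "D 0 t = (a +++ b) t"
    proof (cases "t < 1/2")
      case True
      have "2*t \<notin> Sa"
      proof
        assume "2*t \<in> Sa" then have "(2*t)/2 \<in> (\<lambda>x. x/2) ` Sa" by blast
        then show False using t by simp
      qed
      then show ?thesis using True t Da(1) by (auto simp: D_def joinpaths_def)
    next
      case False
      have "2*t - 1 \<notin> Sb"
      proof
        assume "2*t - 1 \<in> Sb" then have "((2*t - 1)+1)/2 \<in> (\<lambda>x. (x+1)/2) ` Sb" by blast
        then show False using t by simp
      qed
      then show ?thesis using False t Db(1) by (auto simp: D_def joinpaths_def)
    qed
  next
    fix n t assume t: "t \<in> ?U"
    show "(D n has_vector_derivative D (Suc n) t) (at t)"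
    proof (cases "t < 1/2")
      case True
      have "2*t \<notin> Sa"
      proof
        assume "2*t \<in> Sa" then have "(2*t)/2 \<in> (\<lambda>x. x/2) ` Sa" by blast
        then show False using t by simp
      qed
      then have "(Da n has_vector_derivative Da (Suc n) (2*t+0)) (at (2*t+0))" using True t Da(2) by auto
      from chain2[OF this, of "2^n"]
      have "((\<lambda>u. (2^n) *\<^sub>R Da n (2*u+0)) has_vector_derivative D (Suc n) t) (at t)"
        using True by (simp add: D_def mult.commute)
      then show ?thesis
        by (rule has_vector_derivative_transform_within_open[where S="{..<1/2}"]) (use True in \<open>auto simp: D_def\<close>)
    next
      case False
      then have F: "t > 1/2" using t by auto
      have "2*t - 1 \<notin> Sb"
      proof
        assume "2*t - 1 \<in> Sb" then have "((2*t - 1)+1)/2 \<in> (\<lambda>x. (x+1)/2) ` Sb" by blast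
        then show False using t by simp
      qed
      then have "(Db n has_vector_derivative Db (Suc n) (2*t+(-1))) (at (2*t+(-1)))" using F t Db(2) by auto
      from chain2[OF this, of "2^n"]
      have "((\<lambda>u. (2^n) *\<^sub>R Db n (2*u+(-1))) has_vector_derivative D (Suc n) t) (at t)"
        using F by (simp add: D_def mult.commute)
      then show ?thesis
        by (rule has_vector_derivative_transform_within_open[where S="{1/2<..}"]) (use F in \<open>auto simp: D_def\<close>)
    qed
  qed
qed

definition psm :: "(real \<Rightarrow> 'a::real_normed_vector) \<Rightarrow> bool" where
  "psm f \<longleftrightarrow> (\<exists>S. finite S \<and> smooth_on_open f ({0<..<1} - S))"

lemma psm_join: "psm a \<Longrightarrow> psm b \<Longrightarrow> psm (a +++ b)"
proof -
  assume "psm a" "psm b"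
  then obtain Sa Sb where "finite Sa" "smooth_on_open a ({0<..<1} - Sa)" "finite Sb" "smooth_on_open b ({0<..<1} - Sb)"
    unfolding psm_def by blast
  then show ?thesis unfolding psm_def
    by (intro exI[of _ "{1/2} \<union> (\<lambda>x. x/2) ` Sa \<union> (\<lambda>x. (x+1)/2) ` Sb"] conjI smooth_join) auto
qed

definition Dg :: "'m::finite \<Rightarrow> complex \<Rightarrow> complex^'m^'m" where
  "Dg a0 z = (\<chi> i j. if i = j then (if i = a0 then z else 1) else 0)"

definition C0 :: "'m::finite \<Rightarrow> complex^'m^'m" where
  "C0 a0 = (\<chi> i j. if i = j \<and> i \<noteq> a0 then 1 else 0)"

definition Lm :: "'m::finite \<Rightarrow> complex \<Rightarrow> complex^'m^'m" where
  "Lm a0 z = (\<chi> i j. if i = j \<and> i = a0 then z else 0)"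

lemma Dg_nth [simp]: "Dg a0 z $ i $ j = (if i = j then (if i = a0 then z else 1) else 0)"
  by (simp add: Dg_def)

lemma Dg_split: "Dg a0 z = C0 a0 + Lm a0 z"
  by (simp add: vec_eq_iff C0_def Lm_def)

lemma Lm_bl: "bounded_linear (Lm a0)"
proof -
  have "linear (Lm a0)"
    by (rule linearI) (auto simp: vec_eq_iff Lm_def)
  then show ?thesis using linear_conv_bounded_linear by blast
qed

lemma Dg_1: "Dg a0 1 = mat 1"
  by (simp add: vec_eq_iff mat_def)

lemma det_Dg: "det (Dg a0 z) = z"
proof -
  have "det (Dg a0 z) = prod (\<lambda>i. Dg a0 z $ i $ i) UNIV"
    by (rule det_diagonal) simp
  also have "\<dots> = prod (\<lambda>i. if i = a0 then z else 1) UNIV" by simp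
  also have "\<dots> = z" by (subst prod.delta) auto
  finally show ?thesis .
qed

lemma Dg_mult: "Dg a0 z ** Dg a0 w = Dg a0 (z * w)"
  unfolding matrix_matrix_mult_def
  by (simp add: vec_eq_iff if_distrib[of "\<lambda>x. x * _"] cong: if_cong)

lemma cadjoint_Dg: "cadjoint (Dg a0 z) = Dg a0 (cnj z)"
  by (simp add: vec_eq_iff cadjoint_def)

lemma unitary_Dg: "cmod z = 1 \<Longrightarrow> unitary_mat (Dg a0 z)"
proof -
  assume "cmod z = 1"
  then have "z * cnj z = 1" "cnj z * z = 1"
    using complex_norm_square[of z] by (simp_all add: mult.commute)
  then show ?thesis by (simp add: unitary_mat_def cadjoint_Dg Dg_mult Dg_1)
qed

lemma psm_Dg_Ep: "psm (\<lambda>t. Dg a0 (Ep a c t))"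
proof -
  define D where "D n t = (if n = 0 then C0 a0 else 0) + Lm a0 (c^n * Ep a c t)" for n t
  have "smooth_on_open (\<lambda>t. Dg a0 (Ep a c t)) {0<..<1}"
    unfolding smooth_on_open_def
  proof (intro exI[of _ D] conjI allI ballI)
    fix t :: real show "D 0 t = Dg a0 (Ep a c t)" by (simp add: D_def Dg_split)
  next
    fix n and t :: real
    have "((\<lambda>t. c^n * Ep a c t) has_vector_derivative (c^n * (c * Ep a c t))) (at t)"
      by (intro has_vector_derivative_mult_right Ep_deriv)
    from bounded_linear.has_vector_derivative[OF Lm_bl this, of a0]
    have "((\<lambda>t. (if n = 0 then C0 a0 else 0) + Lm a0 (c^n * Ep a c t)) has_vector_derivative
            (0 + Lm a0 (c^n * (c * Ep a c t)))) (at t)"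
      by (intro has_vector_derivative_add) auto
    moreover have "D (Suc n) t = 0 + Lm a0 (c^n * (c * Ep a c t))" by (simp add: D_def ac_simps)
    moreover have "D n = (\<lambda>t. (if n = 0 then C0 a0 else 0) + Lm a0 (c^n * Ep a c t))" by (simp add: fun_eq_iff D_def)
    ultimately show "(D n has_vector_derivative D (Suc n) t) (at t)" by simp
  qed
  then show ?thesis unfolding psm_def by (intro exI[of _ "{}"]) simp
qed

lemma comp_join: "f \<circ> (a +++ b) = (f \<circ> a) +++ (f \<circ> b)"
  by (auto simp: fun_eq_iff joinpaths_def)

definition gf :: "int \<Rightarrow> real \<times> real \<Rightarrow> complex" where
  "gf n k = (if fst k = 1/2 then cis (2 * pi * of_int n * (snd k + 1/2)) else 1)"

lemma Ep00: "Ep 0 0 = (\<lambda>t. 1)" by (simp add: Ep_def fun_eq_iff)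

lemma g1: "gf n \<circ> linepath v1 v2 = Ep 0 0"
  by (simp add: Ep00 fun_eq_iff gf_def linepath_def v1_def v2_def)
lemma g6: "gf n \<circ> linepath v6 v1 = Ep 0 0"
  by (simp add: Ep00 fun_eq_iff gf_def linepath_def v1_def v6_def)
lemma g2: "gf n \<circ> linepath v2 v3 = Ep 0 0"
  by (simp add: Ep00 fun_eq_iff gf_def linepath_def v2_def v3_def)
lemma g5: "gf n \<circ> linepath v5 v6 = Ep 0 0"
proof -
  have "cis (2 * pi * of_int n) = 1" by (rule cis_multiple_2pi) simp
  then show ?thesis
    by (simp add: Ep00 fun_eq_iff gf_def linepath_def v5_def v6_def)
qed
lemma g3: "gf n \<circ> linepath v3 v4 = Ep 0 (\<i> * of_real (pi * of_int n))"
proof (rule ext)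
  fix t :: real
  have lp: "linepath v3 v4 t = (1/2, t/2 - 1/2)"
    by (simp add: linepath_def v3_def v4_def prod_eq_iff field_simps)
  have a: "2 * pi * of_int n * (t/2 - 1/2 + 1/2) = pi * of_int n * t" by simp
  have "gf n (linepath v3 v4 t) = cis (pi * of_int n * t)"
    unfolding lp gf_def by (simp only: fst_conv snd_conv refl if_True a)
  also have "\<dots> = Ep 0 (\<i> * of_real (pi * of_int n)) t"
    by (simp add: cis_conv_exp Ep_def mult.assoc)
  finally show "(gf n \<circ> linepath v3 v4) t = Ep 0 (\<i> * of_real (pi * of_int n)) t" by simp
qed

lemma g4: "gf n \<circ> linepath v4 v5 = Ep (\<i> * of_real (pi * of_int n)) (\<i> * of_real (pi * of_int n))"
proof (rule ext)
  fix t :: real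
  have lp: "linepath v4 v5 t = (1/2, t/2)"
    by (simp add: linepath_def v4_def v5_def prod_eq_iff field_simps)
  have a: "2 * pi * of_int n * (t/2 + 1/2) = pi * of_int n + pi * of_int n * t" by (simp add: algebra_simps)
  have "gf n (linepath v4 v5 t) = cis (pi * of_int n + pi * of_int n * t)"
    unfolding lp gf_def by (simp only: fst_conv snd_conv refl if_True a)
  also have "\<dots> = Ep (\<i> * of_real (pi * of_int n)) (\<i> * of_real (pi * of_int n)) t"
    by (simp add: cis_conv_exp Ep_def algebra_simps)
  finally show "(gf n \<circ> linepath v4 v5) t = Ep (\<i> * of_real (pi * of_int n)) (\<i> * of_real (pi * of_int n)) t" by simp
qed

lemma g_bdry: "gf n \<circ> bdry_path = Ep 0 0 +++ (Ep 0 0 +++ (Ep 0 (\<i> * of_real (pi * of_int n)) +++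
   (Ep (\<i> * of_real (pi * of_int n)) (\<i> * of_real (pi * of_int n)) +++ (Ep 0 0 +++ Ep 0 0))))"
  unfolding bdry_path_def comp_join g1 g2 g3 g4 g5 g6 ..

lemma Ep_start: "pathstart (Ep a c) = exp a" by (simp add: pathstart_def Ep_def)
lemma Ep_finish: "pathfinish (Ep a c) = exp (a + c)" by (simp add: pathfinish_def Ep_def)

lemma exp2: "exp (\<i> * of_real (pi * of_int n) + \<i> * of_real (pi * of_int n)) = 1"
proof -
  have "exp (\<i> * of_real (pi * of_int n) + \<i> * of_real (pi * of_int n)) = cis (2 * pi * of_int n)"
    by (simp add: cis_conv_exp algebra_simps)
  also have "\<dots> = 1" by (rule cis_multiple_2pi) simp
  finally show ?thesis .
qed

lemma wj:
  assumes "path a" "0 \<notin> path_image a" "path b" "0 \<notin> path_image b" "pathfinish a = pathstart b"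
  shows "path (a +++ b) \<and> 0 \<notin> path_image (a +++ b) \<and>
         winding_number (a +++ b) 0 = winding_number a 0 + winding_number b 0"
  using assms by (simp add: path_join_imp not_in_path_image_join winding_number_join)

lemma g_bdry_winding: "winding_number (gf n \<circ> bdry_path) 0 = of_int n"
  and g_bdry_path: "path (gf n \<circ> bdry_path)"
proof -
  let ?c = "\<i> * of_real (pi * of_int n)"
  have P: "path (Ep a c)" "0 \<notin> path_image (Ep a c)" for a c by (rule Ep_path, rule Ep_nz)
  have j5: "path (Ep 0 0 +++ Ep 0 0) \<and> 0 \<notin> path_image (Ep 0 0 +++ Ep 0 0) \<and>
    winding_number (Ep 0 0 +++ Ep 0 0) 0 = winding_number (Ep 0 0) 0 + winding_number (Ep 0 0) 0"
    by (rule wj) (auto simp: P Ep_start Ep_finish)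
  have j4: "path (Ep ?c ?c +++ (Ep 0 0 +++ Ep 0 0)) \<and> 0 \<notin> path_image (Ep ?c ?c +++ (Ep 0 0 +++ Ep 0 0)) \<and>
    winding_number (Ep ?c ?c +++ (Ep 0 0 +++ Ep 0 0)) 0 = winding_number (Ep ?c ?c) 0 + winding_number (Ep 0 0 +++ Ep 0 0) 0"
    by (rule wj) (use j5 exp2 in \<open>auto simp: P Ep_start Ep_finish\<close>)
  have j3: "path (Ep 0 ?c +++ (Ep ?c ?c +++ (Ep 0 0 +++ Ep 0 0))) \<and> 0 \<notin> path_image (Ep 0 ?c +++ (Ep ?c ?c +++ (Ep 0 0 +++ Ep 0 0))) \<and>
    winding_number (Ep 0 ?c +++ (Ep ?c ?c +++ (Ep 0 0 +++ Ep 0 0))) 0 = winding_number (Ep 0 ?c) 0 + winding_number (Ep ?c ?c +++ (Ep 0 0 +++ Ep 0 0)) 0"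
    by (rule wj) (use j4 in \<open>auto simp: P Ep_start Ep_finish\<close>)
  have j2: "path (Ep 0 0 +++ (Ep 0 ?c +++ (Ep ?c ?c +++ (Ep 0 0 +++ Ep 0 0)))) \<and> 0 \<notin> path_image (Ep 0 0 +++ (Ep 0 ?c +++ (Ep ?c ?c +++ (Ep 0 0 +++ Ep 0 0)))) \<and>
    winding_number (Ep 0 0 +++ (Ep 0 ?c +++ (Ep ?c ?c +++ (Ep 0 0 +++ Ep 0 0)))) 0 = winding_number (Ep 0 0) 0 + winding_number (Ep 0 ?c +++ (Ep ?c ?c +++ (Ep 0 0 +++ Ep 0 0))) 0"
    by (rule wj) (use j3 in \<open>auto simp: P Ep_start Ep_finish\<close>)
  have j1: "path (Ep 0 0 +++ (Ep 0 0 +++ (Ep 0 ?c +++ (Ep ?c ?c +++ (Ep 0 0 +++ Ep 0 0))))) \<and>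
    winding_number (Ep 0 0 +++ (Ep 0 0 +++ (Ep 0 ?c +++ (Ep ?c ?c +++ (Ep 0 0 +++ Ep 0 0))))) 0 = winding_number (Ep 0 0) 0 + winding_number (Ep 0 0 +++ (Ep 0 ?c +++ (Ep ?c ?c +++ (Ep 0 0 +++ Ep 0 0)))) 0"
    using wj[of "Ep 0 0" "Ep 0 0 +++ (Ep 0 ?c +++ (Ep ?c ?c +++ (Ep 0 0 +++ Ep 0 0)))"] j2 by (auto simp: P Ep_start Ep_finish)
  have W0: "winding_number (Ep 0 0) 0 = 0" using Ep_winding[of 0 0] by simp
  have "winding_number (Ep 0 0 +++ (Ep 0 0 +++ (Ep 0 ?c +++ (Ep ?c ?c +++ (Ep 0 0 +++ Ep 0 0))))) 0
      = winding_number (Ep 0 ?c) 0 + winding_number (Ep ?c ?c) 0"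
    using j1 j2 j3 j4 j5 W0 by (simp only: add_0_left add_0_right)
  also have "\<dots> = ?c / (2 * pi * \<i>) + ?c / (2 * pi * \<i>)" by (simp only: Ep_winding)
  also have "?c / (2 * pi * \<i>) + ?c / (2 * pi * \<i>) = of_int n"
    by (simp add: field_simps)
  finally show "winding_number (gf n \<circ> bdry_path) 0 = of_int n" by (simp add: g_bdry)
  show "path (gf n \<circ> bdry_path)" using j1 by (simp add: g_bdry)
qed

lemma Dg_cont: "continuous_on S (Dg a0)"
proof -
  have "continuous_on S (\<lambda>z. C0 a0 + Lm a0 z)"
    by (intro continuous_intros linear_continuous_on Lm_bl)
  then show ?thesis by (simp add: Dg_split[abs_def])
qed

lemma path_Dg: "path f \<Longrightarrow> path (Dg a0 \<circ> f)"
  unfolding path_def by (rule continuous_on_compose) (auto intro: Dg_cont)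

lemma psm_Dg_Ep': "psm (Dg a0 \<circ> Ep a c)"
  using psm_Dg_Ep[of a0 a c] by (simp add: o_def)

lemma psm_X: "psm (Dg a0 \<circ> (gf n \<circ> bdry_path))"
  unfolding g_bdry comp_join by (intro psm_join psm_Dg_Ep')

lemma seg_fst: "k \<in> closed_segment a b \<Longrightarrow> fst a = c \<Longrightarrow> fst b = c \<Longrightarrow> fst k = (c::real)"
proof -
  assume h: "k \<in> closed_segment a b" "fst a = c" "fst b = c"
  from h(1) obtain u where "k = (1-u) *\<^sub>R a + u *\<^sub>R b" by (auto simp: closed_segment_def)
  then have "fst k = (1-u) * fst a + u * fst b" by simp
  with h show ?thesis by (simp add: algebra_simps)
qed
lemma seg_snd: "k \<in> closed_segment a b \<Longrightarrow> snd a = c \<Longrightarrow> snd b = c \<Longrightarrow> snd k = (c::real)"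
proof -
  assume h: "k \<in> closed_segment a b" "snd a = c" "snd b = c"
  from h(1) obtain u where "k = (1-u) *\<^sub>R a + u *\<^sub>R b" by (auto simp: closed_segment_def)
  then have "snd k = (1-u) * snd a + u * snd b" by simp
  with h show ?thesis by (simp add: algebra_simps)
qed

lemma E16_fst: assumes "k \<in> E1 \<union> E6" shows "fst k = 0"
  using assms seg_fst[of k v1 v2 0] seg_fst[of k v6 v1 0] unfolding E1_def E6_def by (auto simp: v1_def v2_def v6_def)
lemma E34_fst: assumes "k \<in> E3 \<union> E4" shows "fst k = 1/2"
  using assms seg_fst[of k v3 v4 "1/2"] seg_fst[of k v4 v5 "1/2"] unfolding E3_def E4_def by (auto simp: v3_def v4_def v5_def)
lemma E2_snd: assumes "k \<in> E2" shows "snd k = -1/2"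
  using assms seg_snd[of k v2 v3 "-1/2"] unfolding E2_def by (auto simp: v3_def v2_def)
lemma E5_snd: assumes "k \<in> E5" shows "snd k = 1/2"
  using assms seg_snd[of k v5 v6 "1/2"] unfolding E5_def by (auto simp: v5_def v6_def)

lemma gf_norm: "cmod (gf n k) = 1" by (simp add: gf_def)

lemma gf_e2: "gf n (k + e2) = gf n k"
proof -
  have "cis (2 * pi * of_int n * (snd k + 1 + 1/2)) = cis (2 * pi * of_int n * (snd k + 1/2)) * cis (2 * pi * of_int n)"
    by (simp add: cis_mult algebra_simps)
  also have "cis (2 * pi * of_int n) = 1" by (rule cis_multiple_2pi) simp
  finally show ?thesis by (simp add: gf_def e2_def)
qed

lemma gf_me2: "gf n (k - e2) = gf n k"
  using gf_e2[of n "k - e2"] by simp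

lemma gf_e1: "fst k = 1/2 \<Longrightarrow> gf n (e1 - k) = cnj (gf n k)"
proof -
  assume f: "fst k = 1/2"
  have "cis (2 * pi * of_int n * (- snd k + 1/2)) = cis (- (2 * pi * of_int n * (snd k + 1/2))) * cis (2 * pi * of_int n)"
    by (simp add: cis_mult algebra_simps)
  also have "cis (2 * pi * of_int n) = 1" by (rule cis_multiple_2pi) simp
  finally show ?thesis using f by (simp add: gf_def e1_def cis_cnj)
qed

lemma gf_E2: "k \<in> E2 \<Longrightarrow> gf n k = 1"
  by (simp add: gf_def E2_snd)
lemma gf_E5: "k \<in> E5 \<Longrightarrow> gf n k = 1"
proof -
  assume "k \<in> E5"
  then have "snd k = 1/2" by (rule E5_snd)
  then have "2 * pi * of_int n * (snd k + 1/2) = 2 * pi * of_int n" by simp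
  moreover have "cis (2 * pi * of_int n) = 1" by (rule cis_multiple_2pi) simp
  ultimately show ?thesis by (simp only: gf_def) simp
qed
lemma gf_E16: "k \<in> E1 \<union> E6 \<Longrightarrow> gf n k = 1"
  by (simp add: gf_def E16_fst)

lemma add_hom_0: "\<forall>x y. A (x + y) = A x + A y \<Longrightarrow> A (0::'a::ab_group_add) = (0::'b::ab_group_add)"
proof -
  assume "\<forall>x y. A (x + y) = A x + A y"
  then have "A (0 + 0) = A 0 + A 0" by blast
  then show ?thesis by simp
qed

lemma sum_semilin:
  fixes A :: "'h::ab_group_add \<Rightarrow> 'h"
  assumes ad: "\<forall>x y. A (x + y) = A x + A y" and sl: "\<forall>c x. A (sc c x) = sc (f c) (A x)"
  shows "A (\<Sum>a\<in>F. sc (c a) (\<phi> a)) = (\<Sum>a\<in>F. sc (f (c a)) (A (\<phi> a)))"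
proof (induction F rule: infinite_finite_induct)
  case (infinite F) then show ?case using add_hom_0[OF ad] by simp
next
  case empty then show ?case using add_hom_0[OF ad] by simp
next
  case (insert x F) then show ?case using ad sl by simp
qed

lemma frame_act_map:
  fixes A :: "'h::ab_group_add \<Rightarrow> 'h" and Y Z :: "complex^'m::finite^'m"
  assumes ad: "\<forall>x y. A (x + y) = A x + A y" and sl: "\<forall>c x. A (sc c x) = sc (f c) (A x)"
    and Y: "\<forall>a b. Y $ a $ b = f (Z $ a $ b)"
  shows "frame_act sc (A \<circ> \<phi>) Y = A \<circ> frame_act sc \<phi> Z"
  unfolding frame_act_def o_def
  by (rule ext, subst sum_semilin[OF ad sl]) (simp add: Y)

lemma cisD1: assumes "complex_inner_space sc ip" shows "\<forall>a b x. sc (a + b) x = sc a x + sc b x"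
  using assms unfolding complex_inner_space_def by (elim conjE) assumption

lemma cisD2: assumes "complex_inner_space sc ip" shows "\<forall>x. sc 1 x = x"
  using assms unfolding complex_inner_space_def by (elim conjE) assumption

lemma cisD3: assumes "complex_inner_space sc ip" shows "\<forall>x y z. ip (x + y) z = ip x z + ip y z"
  using assms unfolding complex_inner_space_def by (elim conjE) assumption

lemma cisD4: assumes "complex_inner_space sc ip" shows "\<forall>x. ip x x = 0 \<longrightarrow> x = 0"
  using assms unfolding complex_inner_space_def by (elim conjE) assumption

lemmas cisD = cisD1 cisD2 cisD3 cisD4

lemma unD1: assumes "unitary_op sc ip U" shows "\<forall>x y. U (x + y) = U x + U y"
  using assms unfolding unitary_op_def clinear_map_def by (elim conjE) assumption

lemma unD2: assumes "unitary_op sc ip U" shows "\<forall>c x. U (sc c x) = sc c (U x)"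
  using assms unfolding unitary_op_def clinear_map_def by (elim conjE) assumption

lemma unD3: assumes "unitary_op sc ip U" shows "surj U"
  using assms unfolding unitary_op_def clinear_map_def by (elim conjE) assumption

lemma unD4: assumes "unitary_op sc ip U" shows "\<forall>x y. ip (U x) (U y) = ip x y"
  using assms unfolding unitary_op_def clinear_map_def by (elim conjE) assumption

lemmas unD = unD1 unD2 unD3 unD4

lemma cis_sc0: "complex_inner_space sc ip \<Longrightarrow> sc 0 x = 0"
proof -
  assume "complex_inner_space sc ip"
  then have "sc (0 + 0) x = sc 0 x + sc 0 x" using cisD(1) by blast
  then show ?thesis by simp
qed

lemma frame_act_id:
  assumes "complex_inner_space sc ip"
  shows "frame_act sc \<phi> (mat 1) = \<phi>"
proof (rule ext)
  fix b
  have s1: "sc 1 x = x" for x using cisD(2)[OF assms] by blast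
  have "frame_act sc \<phi> (mat 1) b = (\<Sum>a\<in>UNIV. if a = b then \<phi> a else 0)"
    unfolding frame_act_def mat_def by (intro sum.cong) (auto simp: s1 cis_sc0[OF assms])
  also have "\<dots> = \<phi> b" by simp
  finally show "frame_act sc \<phi> (mat 1) b = \<phi> b" .
qed

lemma unitary_inj:
  assumes cs: "complex_inner_space sc ip" and U: "unitary_op sc ip U"
  shows "inj U"
proof (rule injI)
  fix x y assume e: "U x = U y"
  have ad: "\<forall>x y. U (x + y) = U x + U y" using unD(1)[OF U] .
  have "U ((x - y) + y) = U (x - y) + U y" using ad by blast
  then have "U (x - y) = 0" using e by simp
  have ip0: "ip 0 z = 0" for z
  proof -
    have "ip (0 + 0) z = ip 0 z + ip 0 z" using cisD(3)[OF cs] by blast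
    then show ?thesis by simp
  qed
  have "ip (U (x - y)) (U (x - y)) = ip (x - y) (x - y)" using unD(4)[OF U] by blast
  then have "ip (x - y) (x - y) = 0" using \<open>U (x - y) = 0\<close> ip0 by simp
  then have "x - y = 0" using cisD(4)[OF cs] by blast
  then show "x = y" by simp
qed

lemma unitary_inv_lin:
  assumes cs: "complex_inner_space sc ip" and U: "unitary_op sc ip U"
  shows "\<forall>x y. inv U (x + y) = inv U x + inv U y" "\<forall>c x. inv U (sc c x) = sc c (inv U x)"
proof -
  have i: "inj U" by (rule unitary_inj[OF cs U])
  have s: "surj U" using unD(3)[OF U] .
  have l: "\<forall>x y. U (x + y) = U x + U y" "\<forall>c x. U (sc c x) = sc c (U x)"
    using unD[OF U] by blast+
  have fi: "U (inv U x) = x" for x using s by (simp add: surj_f_inv_f)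
  have if': "inv U (U x) = x" for x using i by simp
  show "\<forall>x y. inv U (x + y) = inv U x + inv U y"
  proof (intro allI)
    fix x y
    have "inv U (x + y) = inv U (U (inv U x) + U (inv U y))" by (simp add: fi)
    also have "\<dots> = inv U (U (inv U x + inv U y))" using l by simp
    finally show "inv U (x + y) = inv U x + inv U y" by (simp add: if')
  qed
  show "\<forall>c x. inv U (sc c x) = sc c (inv U x)"
  proof (intro allI)
    fix c x
    have "inv U (sc c x) = inv U (sc c (U (inv U x)))" by (simp add: fi)
    also have "\<dots> = inv U (U (sc c (inv U x)))" using l by simp
    finally show "inv U (sc c x) = sc c (inv U x)" by (simp add: if')
  qed
qed

theorem mainTheorem5:
  fixes sc :: "complex \<Rightarrow> 'h::ab_group_add \<Rightarrow> 'h"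
    and ip :: "'h \<Rightarrow> 'h \<Rightarrow> complex"
    and P :: "real \<times> real \<Rightarrow> 'h \<Rightarrow> 'h"
    and \<tau> :: "int \<times> int \<Rightarrow> 'h \<Rightarrow> 'h"
    and \<Theta> :: "'h \<Rightarrow> 'h"
    and r :: int
  assumes H: "hilbert_space sc ip" "separable_hs ip"
    and P1: "\<forall>k. orth_projector sc ip (P k) \<and> (\<exists>b :: 'm::finite \<Rightarrow> 'h. is_onb sc ip (range (P k)) b)"
    and P2: "unitary_rep sc ip \<tau>" "\<forall>k l. P (k + lat l) = \<tau> l \<circ> P k \<circ> inv (\<tau> l)"
    and P3: "antiunitary_op sc ip \<Theta>" "\<Theta> \<circ> \<Theta> = id" "\<forall>k. P (-k) = \<Theta> \<circ> P k \<circ> inv \<Theta>"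
    and P4: "\<forall>l. \<Theta> \<circ> \<tau> l = inv (\<tau> l) \<circ> \<Theta>"
  shows "\<exists>X :: real \<times> real \<Rightarrow> complex^'m^'m.
           (\<forall>k\<in>bdry. unitary_mat (X k)) \<and>
           piecewise_smooth_on (X \<circ> bdry_path) {0..1} \<and>
           winding_number (\<lambda>t. det (X (bdry_path t))) 0 = - of_int r \<and>
           (\<forall>\<Phi> :: real \<times> real \<Rightarrow> 'm \<Rightarrow> 'h.
              (\<forall>k\<in>bdry. is_onb sc ip (range (P k)) (\<Phi> k)) \<and> edge_sym \<Theta> \<tau> \<Phi>
              \<longrightarrow> edge_sym \<Theta> \<tau> (\<lambda>k. frame_act sc (\<Phi> k) (X k))) \<and>
           (\<forall>k\<in>bdry. X k \<noteq> mat 1 \<longrightarrow> k \<in> E3 \<union> E4)"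
proof -
  define n where "n = - r"
  define a0 where "a0 = (undefined :: 'm)"
  define X where "X = (\<lambda>k. Dg a0 (gf n k))"
  have cs: "complex_inner_space sc ip" using H(1) unfolding hilbert_space_def by (elim conjE) assumption
  have unit: "\<forall>k\<in>bdry. unitary_mat (X k)" by (simp add: X_def unitary_Dg gf_norm)
  have Xb: "X \<circ> bdry_path = Dg a0 \<circ> (gf n \<circ> bdry_path)" by (simp add: X_def fun_eq_iff)
  have ps: "piecewise_smooth_on (X \<circ> bdry_path) {0..1}"
    unfolding piecewise_smooth_on_def Xb
    using path_Dg[OF g_bdry_path, of a0 n] psm_X[of a0 n] by (simp add: path_def psm_def)
  have wn: "winding_number (\<lambda>t. det (X (bdry_path t))) 0 = - of_int r"
  proof -
    have "(\<lambda>t. det (X (bdry_path t))) = gf n \<circ> bdry_path" by (simp add: X_def det_Dg fun_eq_iff)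
    then show ?thesis using g_bdry_winding[of n] by (simp add: n_def)
  qed
  have X1: "X k = mat 1" if "gf n k = 1" for k using that by (simp add: X_def Dg_1)
  have tu: "unitary_op sc ip (\<tau> l)" for l using P2(1) unfolding unitary_rep_def by blast
  have Th1: "\<forall>x y. \<Theta> (x + y) = \<Theta> x + \<Theta> y" using P3(1) unfolding antiunitary_op_def by (elim conjE) assumption
  have Th2: "\<forall>c x. \<Theta> (sc c x) = sc (cnj c) (\<Theta> x)" using P3(1) unfolding antiunitary_op_def by (elim conjE) assumption
  have es: "\<forall>\<Phi> :: real \<times> real \<Rightarrow> 'm \<Rightarrow> 'h.
              (\<forall>k\<in>bdry. is_onb sc ip (range (P k)) (\<Phi> k)) \<and> edge_sym \<Theta> \<tau> \<Phi>
              \<longrightarrow> edge_sym \<Theta> \<tau> (\<lambda>k. frame_act sc (\<Phi> k) (X k))"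
  proof (intro allI impI)
    fix \<Phi> :: "real \<times> real \<Rightarrow> 'm \<Rightarrow> 'h"
    assume "(\<forall>k\<in>bdry. is_onb sc ip (range (P k)) (\<Phi> k)) \<and> edge_sym \<Theta> \<tau> \<Phi>"
    then have es: "edge_sym \<Theta> \<tau> \<Phi>" by blast
    show "edge_sym \<Theta> \<tau> (\<lambda>k. frame_act sc (\<Phi> k) (X k))"
      unfolding edge_sym_def
    proof (intro conjI ballI)
      fix k assume k: "k \<in> E1 \<union> E6"
      have f: "fst k = 0" by (rule E16_fst[OF k])
      have "X k = mat 1" by (rule X1) (simp add: gf_def f)
      moreover have "X (-k) = mat 1" by (rule X1) (simp add: gf_def f)
      moreover have "\<Phi> (-k) = \<Theta> \<circ> \<Phi> k" using es k unfolding edge_sym_def by blast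
      ultimately show "frame_act sc (\<Phi> (-k)) (X (-k)) = \<Theta> \<circ> frame_act sc (\<Phi> k) (X k)"
        by (simp add: frame_act_id[OF cs])
    next
      fix k assume k: "k \<in> E2"
      have "X (k + e2) = X k" by (simp add: X_def gf_e2)
      moreover have "\<Phi> (k + e2) = \<tau> (0, 1) \<circ> \<Phi> k" using es k unfolding edge_sym_def by blast
      moreover have "frame_act sc (\<tau> (0, 1) \<circ> \<Phi> k) (X k) = \<tau> (0, 1) \<circ> frame_act sc (\<Phi> k) (X k)"
        by (rule frame_act_map[where f="\<lambda>c. c"]) (use unD1[OF tu] unD2[OF tu] in auto)
      ultimately show "frame_act sc (\<Phi> (k + e2)) (X (k + e2)) = \<tau> (0, 1) \<circ> frame_act sc (\<Phi> k) (X k)"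
        by simp
    next
      fix k assume k: "k \<in> E3 \<union> E4"
      have f: "fst k = 1/2" by (rule E34_fst[OF k])
      have Y: "\<forall>a b. X (e1 - k) $ a $ b = cnj (X k $ a $ b)" by (simp add: X_def gf_e1[OF f])
      have "\<Phi> (e1 - k) = \<tau> (1, 0) \<circ> \<Theta> \<circ> \<Phi> k" using es k unfolding edge_sym_def by blast
      moreover have "frame_act sc (\<tau> (1, 0) \<circ> \<Theta> \<circ> \<Phi> k) (X (e1 - k)) = \<tau> (1, 0) \<circ> \<Theta> \<circ> frame_act sc (\<Phi> k) (X k)"
        by (rule frame_act_map[where f=cnj]) (use unD1[OF tu] unD2[OF tu] Th1 Th2 Y in auto)
      ultimately show "frame_act sc (\<Phi> (e1 - k)) (X (e1 - k)) = \<tau> (1, 0) \<circ> \<Theta> \<circ> frame_act sc (\<Phi> k) (X k)"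
        by simp
    next
      fix k assume k: "k \<in> E5"
      have "X (k - e2) = X k" by (simp add: X_def gf_me2)
      moreover have "\<Phi> (k - e2) = inv (\<tau> (0, 1)) \<circ> \<Phi> k" using es k unfolding edge_sym_def by blast
      moreover have "frame_act sc (inv (\<tau> (0, 1)) \<circ> \<Phi> k) (X k) = inv (\<tau> (0, 1)) \<circ> frame_act sc (\<Phi> k) (X k)"
        by (rule frame_act_map[where f="\<lambda>c. c"]) (use unitary_inv_lin[OF cs tu] in auto)
      ultimately show "frame_act sc (\<Phi> (k - e2)) (X (k - e2)) = inv (\<tau> (0, 1)) \<circ> frame_act sc (\<Phi> k) (X k)"
        by simp
    qed
  qed
  have iii: "\<forall>k\<in>bdry. X k \<noteq> mat 1 \<longrightarrow> k \<in> E3 \<union> E4"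
  proof (intro ballI impI)
    fix k assume k: "k \<in> bdry" and nx: "X k \<noteq> mat 1"
    have "k \<notin> E1 \<union> E6" using nx X1 gf_E16 by blast
    moreover have "k \<notin> E2" using nx X1 gf_E2 by blast
    moreover have "k \<notin> E5" using nx X1 gf_E5 by blast
    ultimately show "k \<in> E3 \<union> E4" using k unfolding bdry_def by blast
  qed
  show ?thesis
    by (rule exI[of _ X]) (use unit ps wn es iii in blast)
qed

end
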